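(* Let $m,n$ be positive integers. If $BS(m+1,m)\neq\emptyset$ and $BS(n+1,n)\neq\emptyset$, then $BS(m',m')\neq\emptyset$, where $m'=(2m+1)(2n+1)$.
   Context: For a sequence $\mathbf{s}=(s_0,\dots,s_{l-1})\in\{\pm1\}^l$ and an integer $j\ge 0$, its non-periodic autocorrelation is $N_{\mathbf{s}}(j)=\sum_{i=0}^{l-j-1}s_is_{i+j}$ if $0\le j<l$ and $N_{\mathbf{s}}(j)=0$ otherwise. For positive integers $p,q$, $BS(p,q)$ denotes the set of quadruples $(\mathbf{a},\mathbf{b},\mathbf{c},\mathbf{d})$ of $(\pm1)$-sequences of lengths $p,p,q,q$ respectively (base sequences) such that $N_{\mathbf{a}}(j)+N_{\mathbf{b}}(j)+N_{\mathbf{c}}(j)+N_{\mathbf{d}}(j)=0$ for every integer $j\ge 1$. *)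

theory Defs
  imports Main
begin

definition pm1_seq :: "int list \<Rightarrow> bool" where
  "pm1_seq s \<longleftrightarrow> (\<forall>x \<in> set s. x = 1 \<or> x = -1)"

definition npaf :: "int list \<Rightarrow> nat \<Rightarrow> int" where
  "npaf s j = (if j < length s then (\<Sum>i<length s - j. s ! i * s ! (i + j)) else 0)"

definition BS :: "nat \<Rightarrow> nat \<Rightarrow> (int list \<times> int list \<times> int list \<times> int list) set" where
  "BS p q = {(a, b, c, d). pm1_seq a \<and> pm1_seq b \<and> pm1_seq c \<and> pm1_seq d \<and>
      length a = p \<and> length b = p \<and> length c = q \<and> length d = q \<and>
      (\<forall>j::nat. j \<ge> 1 \<longrightarrow> npaf a j + npaf b j + npaf c j + npaf d j = 0)}"

end

theory Submission
  imports Defs "HOL-Computational_Algebra.Polynomial"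
begin


fun il :: "'a list \<Rightarrow> 'a list \<Rightarrow> 'a list" where
  "il (x#xs) (y#ys) = x # y # il xs ys"
| "il xs [] = xs"
| "il [] ys = ys"

lemma length_il[simp]: "length (il xs ys) = length xs + length ys"
  by (induct xs ys rule: il.induct) auto

lemma set_il: "set (il xs ys) \<subseteq> set xs \<union> set ys"
  by (induct xs ys rule: il.induct) auto

lemma map_il: "map f (il xs ys) = il (map f xs) (map f ys)"
  by (induct xs ys rule: il.induct) auto

lemma il_snoc: "length xs = Suc (length ys) \<Longrightarrow> il (xs @ [x]) (ys @ [y]) = il xs ys @ [y, x]"
proof (induct xs ys rule: il.induct)
  case (2 xs)
  then obtain a where "xs = [a]" by (cases xs) auto
  then show ?case by simp
qed auto

lemma rev_il: "length xs = Suc (length ys) \<Longrightarrow> rev (il xs ys) = il (rev xs) (rev ys)"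
proof (induct xs ys rule: il.induct)
  case (1 x xs y ys)
  then show ?case by (simp add: il_snoc)
next
  case (2 xs)
  then obtain a where "xs = [a]" by (cases xs) auto
  then show ?case by simp
qed auto

abbreviation XX :: "int poly" where "XX \<equiv> [:0, 1:]"

fun GS :: "int poly \<Rightarrow> int poly list \<Rightarrow> int poly" where
  "GS q [] = 0"
| "GS q (p # ps) = p + q * GS q ps"

lemma GS_il: "length ps = Suc (length qs) \<Longrightarrow> GS q (il ps qs) = GS (q^2) ps + q * GS (q^2) qs"
proof (induct ps qs rule: il.induct)
  case (1 x xs y ys)
  then show ?case by (simp add: algebra_simps power2_eq_square)
next
  case (2 xs)
  then obtain a where "xs = [a]" by (cases xs) auto
  then show ?case by simp
qed auto

lemma GS_const: "GS q (map (\<lambda>x. [:x:]) xs) = pcompose (Poly xs) q"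
  by (induct xs) (auto simp: pcompose_pCons)

lemma Poly_GS: "Poly xs = GS XX (map (\<lambda>x. [:x:]) xs)"
  by (simp add: GS_const)

lemma monom1: "monom (1::int) n = XX ^ n"
  by (simp add: monom_altdef)

lemma Poly_concat: "(\<forall>xs\<in>set xss. length xs = r) \<Longrightarrow> Poly (concat xss) = GS (XX ^ r) (map Poly xss)"
  by (induct xss) (simp_all add: Poly_append monom1)

lemma GS_zip: "length U0 = length U1 \<Longrightarrow>
  GS q (map (\<lambda>(u0,u1). smult u0 P + smult u1 Q) (zip U0 U1)) = pcompose (Poly U0) q * P + pcompose (Poly U1) q * Q"
proof (induct U0 arbitrary: U1)
  case Nil then show ?case by simp
next
  case (Cons a U0)
  then obtain b U1' where "U1 = b # U1'" by (cases U1) auto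
  with Cons have "GS q (map (\<lambda>(u0,u1). smult u0 P + smult u1 Q) (zip (a#U0) U1)) = smult a P + smult b Q + q * (pcompose (Poly U0) q * P + pcompose (Poly U1') q * Q)"
    by simp
  also have "\<dots> = pcompose (Poly (a#U0)) q * P + pcompose (Poly U1) q * Q"
    using \<open>U1 = b # U1'\<close> by (simp add: pcompose_pCons distrib_right distrib_left mult.assoc)
  finally show ?case .
qed

lemma Poly_il: "length xs = Suc (length ys) \<Longrightarrow>
   Poly (il xs ys) = pcompose (Poly xs) (XX^2) + XX * pcompose (Poly ys) (XX^2)"
proof -
  assume "length xs = Suc (length ys)"
  then show ?thesis
    unfolding Poly_GS[of "il xs ys"] by (simp add: map_il GS_il GS_const)
qed




definition blk :: "int \<Rightarrow> int \<Rightarrow> int list \<Rightarrow> int list \<Rightarrow> int \<times> int \<Rightarrow> int list" where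
  "blk s0 s1 V0 V1 uu = il (map ((*) (s0 * fst uu)) V0) (map ((*) (s1 * snd uu)) V1)"

definition mkY :: "int \<Rightarrow> int \<Rightarrow> int \<Rightarrow> int \<Rightarrow> int list \<Rightarrow> int list \<Rightarrow> int list \<Rightarrow> int list
   \<Rightarrow> int list \<Rightarrow> int list \<Rightarrow> int list \<Rightarrow> int list \<Rightarrow> int list" where
  "mkY s0 s1 s2 s3 U0 U1 U2 U3 V0 V1 V2 V3 =
     concat (il (map (blk s0 s1 V0 V1) (zip U0 U1)) (map (blk s2 s3 V2 V3) (zip U2 U3)))"

lemma length_concat_const: "(\<forall>xs\<in>set xss. length xs = r) \<Longrightarrow> length (concat xss) = length xss * r"
  by (induct xss) auto

lemma length_blk: "length V0 = Suc l \<Longrightarrow> length V1 = l \<Longrightarrow> length (blk s0 s1 V0 V1 uu) = 2*l+1"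
  by (simp add: blk_def)

lemma blocks_len:
  assumes "length V0 = Suc l" "length V1 = l" "length V2 = Suc l" "length V3 = l"
  shows "\<forall>xs\<in>set (il (map (blk s0 s1 V0 V1) (zip U0 U1)) (map (blk s2 s3 V2 V3) (zip U2 U3))). length xs = 2*l+1"
proof
  fix xs assume "xs \<in> set (il (map (blk s0 s1 V0 V1) (zip U0 U1)) (map (blk s2 s3 V2 V3) (zip U2 U3)))"
  then have "xs \<in> set (map (blk s0 s1 V0 V1) (zip U0 U1)) \<or> xs \<in> set (map (blk s2 s3 V2 V3) (zip U2 U3))"
    using subsetD[OF set_il] by (metis Un_iff)
  then show "length xs = 2*l+1" by (auto simp: length_blk[OF assms(1,2)] length_blk[OF assms(3,4)])
qed

lemma length_mkY:
  assumes "length U0 = Suc k" "length U1 = Suc k" "length U2 = k" "length U3 = k"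
    "length V0 = Suc l" "length V1 = l" "length V2 = Suc l" "length V3 = l"
  shows "length (mkY s0 s1 s2 s3 U0 U1 U2 U3 V0 V1 V2 V3) = (2*k+1)*(2*l+1)"
  unfolding mkY_def
  by (subst length_concat_const[OF blocks_len[OF assms(5-8)]]) (simp add: assms)

lemma pm1_mult: "(a::int) \<in> {1,-1} \<Longrightarrow> b \<in> {1,-1} \<Longrightarrow> a * b \<in> {1,-1}"
  by auto

lemma pm1_blk:
  assumes "s0 \<in> {1,-1}" "s1 \<in> {1,-1}" "u0 \<in> {1,-1}" "u1 \<in> {1,-1}"
    "\<forall>v\<in>set V0 \<union> set V1. v \<in> {1,-1}" "x \<in> set (blk s0 s1 V0 V1 (u0,u1))"
  shows "x \<in> {1,-1}"
proof -
  have "x \<in> set (map ((*) (s0 * u0)) V0) \<union> set (map ((*) (s1 * u1)) V1)"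
    using assms(6) subsetD[OF set_il] unfolding blk_def by (metis fst_conv snd_conv)
  then show ?thesis
  proof
    assume "x \<in> set (map ((*) (s0 * u0)) V0)"
    then obtain v where "v \<in> set V0" "x = s0 * u0 * v" by auto
    then show ?thesis using assms pm1_mult by auto
  next
    assume "x \<in> set (map ((*) (s1 * u1)) V1)"
    then obtain v where "v \<in> set V1" "x = s1 * u1 * v" by auto
    then show ?thesis using assms pm1_mult by auto
  qed
qed

lemma pm1_mkY:
  assumes "s0 \<in> {1,-1}" "s1 \<in> {1,-1}" "s2 \<in> {1,-1}" "s3 \<in> {1,-1}"
   "\<forall>x\<in>set U0 \<union> set U1 \<union> set U2 \<union> set U3 \<union> set V0 \<union> set V1 \<union> set V2 \<union> set V3. x \<in> {1,-1}"
  shows "\<forall>x\<in>set (mkY s0 s1 s2 s3 U0 U1 U2 U3 V0 V1 V2 V3). x = 1 \<or> x = -1"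
proof
  fix x assume "x \<in> set (mkY s0 s1 s2 s3 U0 U1 U2 U3 V0 V1 V2 V3)"
  then obtain xs where xs: "xs \<in> set (il (map (blk s0 s1 V0 V1) (zip U0 U1)) (map (blk s2 s3 V2 V3) (zip U2 U3)))" "x \<in> set xs"
    unfolding mkY_def by auto
  from xs(1) have "xs \<in> set (map (blk s0 s1 V0 V1) (zip U0 U1)) \<or> xs \<in> set (map (blk s2 s3 V2 V3) (zip U2 U3))"
    using subsetD[OF set_il] by (metis Un_iff)
  then have "x \<in> {1,-1}"
  proof
    assume "xs \<in> set (map (blk s0 s1 V0 V1) (zip U0 U1))"
    then obtain u0 u1 where uu: "(u0,u1) \<in> set (zip U0 U1)" "xs = blk s0 s1 V0 V1 (u0,u1)" by auto
    from uu(1) have "u0 \<in> set U0" "u1 \<in> set U1" by (auto dest: set_zip_leftD set_zip_rightD)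
    then show ?thesis using pm1_blk[of s0 s1 u0 u1 V0 V1 x] xs(2) uu(2) assms by blast
  next
    assume "xs \<in> set (map (blk s2 s3 V2 V3) (zip U2 U3))"
    then obtain u0 u1 where uu: "(u0,u1) \<in> set (zip U2 U3)" "xs = blk s2 s3 V2 V3 (u0,u1)" by auto
    from uu(1) have "u0 \<in> set U2" "u1 \<in> set U3" by (auto dest: set_zip_leftD set_zip_rightD)
    then show ?thesis using pm1_blk[of s2 s3 u0 u1 V2 V3 x] xs(2) uu(2) assms by blast
  qed
  then show "x = 1 \<or> x = -1" by simp
qed

lemma Poly_blk:
  assumes "length V0 = Suc l" "length V1 = l"
  shows "Poly (blk s0 s1 V0 V1 uu) = smult (fst uu) (smult s0 (pcompose (Poly V0) (XX^2)))
          + smult (snd uu) (XX * smult s1 (pcompose (Poly V1) (XX^2)))"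
  unfolding blk_def using assms
  by (simp add: Poly_il Poly_map pcompose_smult mult.commute)

lemma rev_blk:
  assumes "length V0 = Suc l" "length V1 = l"
  shows "rev (blk s0 s1 V0 V1 uu) = blk s0 s1 (rev V0) (rev V1) uu"
  unfolding blk_def using assms by (simp add: rev_il rev_map)

lemma Poly_mkY:
  assumes "length U0 = Suc k" "length U1 = Suc k" "length U2 = k" "length U3 = k"
    "length V0 = Suc l" "length V1 = l" "length V2 = Suc l" "length V3 = l"
  shows "Poly (mkY s0 s1 s2 s3 U0 U1 U2 U3 V0 V1 V2 V3) =
     pcompose (Poly U0) (XX^(2*(2*l+1))) * smult s0 (pcompose (Poly V0) (XX^2))
   + pcompose (Poly U1) (XX^(2*(2*l+1))) * (XX * smult s1 (pcompose (Poly V1) (XX^2)))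
   + XX^(2*l+1) * (pcompose (Poly U2) (XX^(2*(2*l+1))) * smult s2 (pcompose (Poly V2) (XX^2))
   + pcompose (Poly U3) (XX^(2*(2*l+1))) * (XX * smult s3 (pcompose (Poly V3) (XX^2))))"
  (is "_ = ?R")
proof -
  let ?E = "map (blk s0 s1 V0 V1) (zip U0 U1)" and ?O = "map (blk s2 s3 V2 V3) (zip U2 U3)"
  have e1: "map Poly ?E = map (\<lambda>(u0,u1). smult u0 (smult s0 (pcompose (Poly V0) (XX^2))) + smult u1 (XX * smult s1 (pcompose (Poly V1) (XX^2)))) (zip U0 U1)"
    using Poly_blk[OF assms(5,6)] by (auto simp: split_def)
  have e2: "map Poly ?O = map (\<lambda>(u0,u1). smult u0 (smult s2 (pcompose (Poly V2) (XX^2))) + smult u1 (XX * smult s3 (pcompose (Poly V3) (XX^2)))) (zip U2 U3)"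
    using Poly_blk[OF assms(7,8)] by (auto simp: split_def)
  have pw: "(XX^(2*l+1))^2 = XX^(2*(2*l+1))" by (metis power_mult mult.commute)
  have "Poly (mkY s0 s1 s2 s3 U0 U1 U2 U3 V0 V1 V2 V3) = GS (XX^(2*l+1)) (map Poly (il ?E ?O))"
    unfolding mkY_def by (rule Poly_concat[OF blocks_len[OF assms(5-8)]])
  also have "\<dots> = GS (XX^(2*l+1)) (il (map Poly ?E) (map Poly ?O))" by (simp add: map_il)
  also have "\<dots> = GS ((XX^(2*l+1))^2) (map Poly ?E) + XX^(2*l+1) * GS ((XX^(2*l+1))^2) (map Poly ?O)"
    by (rule GS_il) (simp add: assms)
  also have "\<dots> = ?R"
    using assms unfolding pw e1 e2 by (subst GS_zip, simp)+ (rule refl)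
  finally show ?thesis .
qed

lemma rev_mkY:
  assumes "length U0 = Suc k" "length U1 = Suc k" "length U2 = k" "length U3 = k"
    "length V0 = Suc l" "length V1 = l" "length V2 = Suc l" "length V3 = l"
  shows "rev (mkY s0 s1 s2 s3 U0 U1 U2 U3 V0 V1 V2 V3) =
         mkY s0 s1 s2 s3 (rev U0) (rev U1) (rev U2) (rev U3) (rev V0) (rev V1) (rev V2) (rev V3)"
proof -
  have "rev (mkY s0 s1 s2 s3 U0 U1 U2 U3 V0 V1 V2 V3) =
    concat (map rev (rev (il (map (blk s0 s1 V0 V1) (zip U0 U1)) (map (blk s2 s3 V2 V3) (zip U2 U3)))))"
    unfolding mkY_def by (simp add: rev_concat)
  also have "\<dots> = concat (map rev (il (rev (map (blk s0 s1 V0 V1) (zip U0 U1))) (rev (map (blk s2 s3 V2 V3) (zip U2 U3)))))"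
    by (subst rev_il) (simp_all add: assms)
  also have "\<dots> = concat (il (map (rev \<circ> blk s0 s1 V0 V1) (zip (rev U0) (rev U1))) (map (rev \<circ> blk s2 s3 V2 V3) (zip (rev U2) (rev U3))))"
    by (simp add: map_il rev_map zip_rev assms)
  also have "\<dots> = mkY s0 s1 s2 s3 (rev U0) (rev U1) (rev U2) (rev U3) (rev V0) (rev V1) (rev V2) (rev V3)"
    unfolding mkY_def using rev_blk[OF assms(5,6)] rev_blk[OF assms(7,8)]
    by (simp add: comp_def)
  finally show ?thesis .
qed




lemma Poly_sum: "Poly xs = (\<Sum>i<length xs. monom (xs!i) i)"
proof -
  have "coeff (Poly xs) n = coeff (\<Sum>i<length xs. monom (xs!i) i) n" for n
  proof -
    have "coeff (\<Sum>i<length xs. monom (xs!i) i) n = (\<Sum>i<length xs. if n = i then xs!i else 0)"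
      by (simp add: coeff_sum coeff_monom)
    also have "\<dots> = (if n < length xs then xs!n else 0)"
      by (simp add: sum.delta)
    finally show ?thesis by (simp add: nth_default_def)
  qed
  then show ?thesis by (simp add: poly_eq_iff)
qed

lemma Poly_rev_sum: "Poly (rev xs) = (\<Sum>k<length xs. monom (xs!k) (length xs - 1 - k))"
proof -
  have "coeff (Poly (rev xs)) n = coeff (\<Sum>k<length xs. monom (xs!k) (length xs - 1 - k)) n" for n
  proof -
    have "coeff (\<Sum>k<length xs. monom (xs!k) (length xs - 1 - k)) n
        = (\<Sum>k<length xs. if k = length xs - 1 - n \<and> n < length xs then xs!k else 0)"
      by (rule trans[OF coeff_sum], rule sum.cong) (auto simp: coeff_monom)
    also have "\<dots> = (if n < length xs then xs!(length xs - 1 - n) else 0)"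
      by (cases "n < length xs") (auto simp: sum.delta')
    finally show ?thesis by (simp add: nth_default_def rev_nth)
  qed
  then show ?thesis by (simp add: poly_eq_iff)
qed

lemma coeff_prod_rev: "coeff (Poly s * Poly (rev s)) t =
   (\<Sum>i<length s. \<Sum>k<length s. if i + (length s - 1 - k) = t then s!i * s!k else 0)"
  unfolding Poly_sum[of s] Poly_rev_sum[of s] sum_product
  by (simp add: coeff_sum mult_monom coeff_monom)

lemma npaf_bot: "j < length s \<Longrightarrow> coeff (Poly s * Poly (rev s)) (length s - 1 - j) = npaf s j"
proof -
  assume j: "j < length s"
  let ?l = "length s"
  have "coeff (Poly s * Poly (rev s)) (?l - 1 - j) =
     (\<Sum>i<?l. \<Sum>k<?l. if k = i + j then s!i * s!k else 0)"
    unfolding coeff_prod_rev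
    by (rule sum.cong[OF refl], rule sum.cong[OF refl]) (use j in auto)
  also have "\<dots> = (\<Sum>i<?l. if i + j < ?l then s!i * s!(i+j) else 0)"
    by (rule sum.cong[OF refl]) (simp add: sum.delta')
  also have "\<dots> = (\<Sum>i\<in>{i\<in>{..<?l}. i + j < ?l}. s!i * s!(i+j))"
    by (rule sum.inter_filter[symmetric]) simp
  also have "{i\<in>{..<?l}. i + j < ?l} = {..<?l - j}" by auto
  finally show ?thesis using j by (simp add: npaf_def)
qed

lemma npaf_top: "coeff (Poly s * Poly (rev s)) (length s - 1 + j) = npaf s j"
proof -
  let ?l = "length s"
  have "coeff (Poly s * Poly (rev s)) (?l - 1 + j) =
     (\<Sum>i<?l. \<Sum>k<?l. if i = k + j then s!i * s!k else 0)"
    unfolding coeff_prod_rev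
    by (rule sum.cong[OF refl], rule sum.cong[OF refl]) auto
  also have "\<dots> = (\<Sum>k<?l. \<Sum>i<?l. if i = k + j then s!i * s!k else 0)"
    by (rule sum.swap)
  also have "\<dots> = (\<Sum>k<?l. if k + j < ?l then s!k * s!(k+j) else 0)"
    by (rule sum.cong[OF refl]) (simp add: sum.delta' mult.commute)
  also have "\<dots> = (\<Sum>k\<in>{k\<in>{..<?l}. k + j < ?l}. s!k * s!(k+j))"
    by (rule sum.inter_filter[symmetric]) simp
  also have "{k\<in>{..<?l}. k + j < ?l} = {..<?l - j}" by auto
  finally show ?thesis by (simp add: npaf_def)
qed

lemma npaf_0: "pm1_seq s \<Longrightarrow> npaf s 0 = int (length s)"
proof -
  assume "pm1_seq s"
  then have "\<forall>i<length s. s!i * s!i = 1" unfolding pm1_seq_def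
    by (metis mult_minus_left mult_minus_right minus_minus mult_1_left nth_mem)
  then show ?thesis
    by (cases "s = []") (simp_all add: npaf_def)
qed




lemma coeff_XX_mult: "coeff (XX * p) t = (if t = 0 then 0 else coeff p (t - 1))"
  by (cases t) (simp_all add: coeff_pCons)

lemma coeff_pCons0: "coeff (pCons 0 p) t = (if t = 0 then 0 else coeff p (t - 1))"
  by (cases t) (simp_all add: coeff_pCons)

lemma BS_poly:
  assumes bs: "(a,b,c,d) \<in> BS (Suc m) m" and m: "m > 0"
  shows "Poly a * Poly (rev a) + Poly b * Poly (rev b) + XX * (Poly c * Poly (rev c) + Poly d * Poly (rev d))
         = smult (int (4*m+2)) (XX^m)"
proof -
  from bs have pa: "pm1_seq a" "pm1_seq b" "pm1_seq c" "pm1_seq d"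
    and la: "length a = Suc m" "length b = Suc m" "length c = m" "length d = m"
    and z: "\<And>j. j \<ge> 1 \<Longrightarrow> npaf a j + npaf b j + npaf c j + npaf d j = 0"
    unfolding BS_def by auto
  let ?L = "Poly a * Poly (rev a) + Poly b * Poly (rev b) + XX * (Poly c * Poly (rev c) + Poly d * Poly (rev d))"
  have "coeff ?L t = coeff (smult (int (4*m+2)) (XX^m)) t" for t
  proof (cases "t < m")
    case True
    define j where "j = m - t"
    have j1: "j \<ge> 1" "j \<le> m" using True by (auto simp: j_def)
    have ca: "coeff (Poly a * Poly (rev a)) t = npaf a j" "coeff (Poly b * Poly (rev b)) t = npaf b j"
      using npaf_bot[of j a] npaf_bot[of j b] la j1 True by (simp_all add: j_def)
    have cc: "coeff (XX * (Poly c * Poly (rev c) + Poly d * Poly (rev d))) t = npaf c j + npaf d j"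
    proof (cases "t = 0")
      case True
      then have "j = m" by (simp add: j_def)
      then show ?thesis using True la by (simp add: coeff_XX_mult npaf_def)
    next
      case False
      then show ?thesis
        using npaf_bot[of j c] npaf_bot[of j d] la j1 True
        by (simp add: coeff_XX_mult coeff_pCons0 j_def)
    qed
    have "coeff ?L t = npaf a j + npaf b j + npaf c j + npaf d j"
      using ca cc by simp
    also have "\<dots> = 0" using z j1 by simp
    finally show ?thesis using True by (simp add: monom1[symmetric] coeff_monom)
  next
    case False
    define j where "j = t - m"
    have tj: "t = m + j" using False by (simp add: j_def)
    have ca: "coeff (Poly a * Poly (rev a)) t = npaf a j" "coeff (Poly b * Poly (rev b)) t = npaf b j"
      using npaf_top[of a j] npaf_top[of b j] la tj by simp_all
    have cc: "coeff (XX * (Poly c * Poly (rev c) + Poly d * Poly (rev d))) t = npaf c j + npaf d j"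
      using npaf_top[of c j] npaf_top[of d j] la tj m by (simp add: coeff_XX_mult coeff_pCons0)
    have "coeff ?L t = npaf a j + npaf b j + npaf c j + npaf d j"
      using ca cc by simp
    also have "\<dots> = (if j = 0 then int (4*m+2) else 0)"
    proof (cases "j = 0")
      case True
      then show ?thesis using npaf_0[OF pa(1)] npaf_0[OF pa(2)] npaf_0[OF pa(3)] npaf_0[OF pa(4)] la by simp
    next
      case False then show ?thesis using z by simp
    qed
    finally show ?thesis using tj by (simp add: monom1[symmetric] coeff_monom)
  qed
  then show ?thesis by (simp add: poly_eq_iff)
qed

lemma pcompose_power_left': "pcompose (p ^ k) q = (pcompose p q) ^ k"
  by (induct k) (simp_all add: pcompose_mult pcompose_1)

lemma pcompose_XX: "pcompose XX q = q"
  by (simp add: pcompose_pCons)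

lemma BS_poly_comp:
  assumes bs: "(a,b,c,d) \<in> BS (Suc m) m" and m: "m > 0"
  shows "pcompose (Poly a) q * pcompose (Poly (rev a)) q + pcompose (Poly b) q * pcompose (Poly (rev b)) q
     + q * (pcompose (Poly c) q * pcompose (Poly (rev c)) q + pcompose (Poly d) q * pcompose (Poly (rev d)) q)
         = smult (int (4*m+2)) (q^m)"
proof -
  have "pcompose (Poly a * Poly (rev a) + Poly b * Poly (rev b) + XX * (Poly c * Poly (rev c) + Poly d * Poly (rev d))) q
     = pcompose (smult (int (4*m+2)) (XX^m)) q"
    using BS_poly[OF bs m] by simp
  then show ?thesis
    by (simp only: pcompose_add pcompose_mult pcompose_smult pcompose_power_left' pcompose_XX)
qed




lemma ring_id:
  fixes A A' B B' C C' D D' E E' F F' G G' H H' W Z :: "'a::comm_ring_1"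
  shows
 "(A * E' + B * (Z * (- H)) + W * (C * F' + D' * (Z * (- G)))) *
  (A' * E + B' * (Z * (- H')) + W * (C' * F + D * (Z * (- G'))))
+ (B * (- E) + A * (Z * (- H')) + W * (D * F' + C' * (Z * G))) *
  (B' * (- E') + A' * (Z * (- H)) + W * (D' * F + C * (Z * G')))
+ (B' * F' + A * (Z * G') + W * (D' * E + C' * (Z * H))) *
  (B * F + A' * (Z * G) + W * (D * E' + C * (Z * H')))
+ (A * F + B' * (Z * (- G)) + W * (C * (- E) + D * (Z * H))) *
  (A' * F' + B * (Z * (- G')) + W * (C' * (- E') + D' * (Z * H')))
= (A * A' + B * B' + W^2 * (C * C' + D * D')) * (E * E' + F * F' + Z^2 * (G * G' + H * H'))"
  by (simp add: algebra_simps power2_eq_square)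

definition PW :: "nat \<Rightarrow> int list \<Rightarrow> int poly" where
  "PW l U = pcompose (Poly U) ((XX^(2*l+1))^2)"
definition PZ :: "int list \<Rightarrow> int poly" where
  "PZ V = pcompose (Poly V) (XX^2)"
definition rowP where
  "rowP l s0 s1 s2 s3 U0 U1 U2 U3 V0 V1 V2 V3 =
     PW l U0 * smult s0 (PZ V0) + PW l U1 * (XX * smult s1 (PZ V1))
   + XX^(2*l+1) * (PW l U2 * smult s2 (PZ V2) + PW l U3 * (XX * smult s3 (PZ V3)))"

lemma Poly_mkY':
  assumes "length U0 = Suc k" "length U1 = Suc k" "length U2 = k" "length U3 = k"
    "length V0 = Suc l" "length V1 = l" "length V2 = Suc l" "length V3 = l"
  shows "Poly (mkY s0 s1 s2 s3 U0 U1 U2 U3 V0 V1 V2 V3) = rowP l s0 s1 s2 s3 U0 U1 U2 U3 V0 V1 V2 V3"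
proof -
  have pw: "(XX^(2*l+1))^2 = XX^(2*(2*l+1))" by (metis power_mult mult.commute)
  show ?thesis unfolding rowP_def PW_def PZ_def pw by (rule Poly_mkY[OF assms])
qed

lemma coeff_smult_XX: "coeff (smult c (XX^N)) t = (if t = N then c else 0)"
  by (simp add: monom1[symmetric] coeff_monom)

theorem theorem1p1:
  fixes m n :: nat
  assumes "m > 0" and "n > 0"
    and "BS (m + 1) m \<noteq> {}" and "BS (n + 1) n \<noteq> {}"
  shows "BS ((2 * m + 1) * (2 * n + 1)) ((2 * m + 1) * (2 * n + 1)) \<noteq> {}"
proof -
  from assms(3) obtain a b c d where bsA: "(a,b,c,d) \<in> BS (Suc m) m" by auto
  from assms(4) obtain e f g h where bsE: "(e,f,g,h) \<in> BS (Suc n) n" by auto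
  from bsA have la: "length a = Suc m" "length b = Suc m" "length c = m" "length d = m"
    and pa: "pm1_seq a" "pm1_seq b" "pm1_seq c" "pm1_seq d" unfolding BS_def by auto
  from bsE have le: "length e = Suc n" "length f = Suc n" "length g = n" "length h = n"
    and pe: "pm1_seq e" "pm1_seq f" "pm1_seq g" "pm1_seq h" unfolding BS_def by auto
  have allpm: "\<forall>x\<in>set a \<union> set b \<union> set c \<union> set d \<union> set e \<union> set f \<union> set g \<union> set h. x \<in> {1,-1}"
    using pa pe unfolding pm1_seq_def by auto
  let ?L = "(2 * m + 1) * (2 * n + 1)"
  define Y0 where "Y0 = mkY 1 (-1) 1 (-1) a b c (rev d) (rev e) h (rev f) g"
  define Y1 where "Y1 = mkY (-1) (-1) 1 1 b a d (rev c) e (rev h) (rev f) g"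
  define Y2 where "Y2 = mkY 1 1 1 1 (rev b) a (rev d) (rev c) (rev f) (rev g) e h"
  define Y3 where "Y3 = mkY 1 (-1) (-1) 1 a (rev b) c d f g e h"
  have len: "length Y0 = ?L" "length Y1 = ?L" "length Y2 = ?L" "length Y3 = ?L"
    unfolding Y0_def Y1_def Y2_def Y3_def by (simp_all add: length_mkY la le)
  have pm: "pm1_seq Y0" "pm1_seq Y1" "pm1_seq Y2" "pm1_seq Y3"
    unfolding pm1_seq_def Y0_def Y1_def Y2_def Y3_def
    by (rule pm1_mkY; use allpm in auto)+
  have P0: "Poly Y0 = rowP n 1 (-1) 1 (-1) a b c (rev d) (rev e) h (rev f) g"
    unfolding Y0_def by (rule Poly_mkY') (simp_all add: la le)
  have P1: "Poly Y1 = rowP n (-1) (-1) 1 1 b a d (rev c) e (rev h) (rev f) g"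
    unfolding Y1_def by (rule Poly_mkY') (simp_all add: la le)
  have P2: "Poly Y2 = rowP n 1 1 1 1 (rev b) a (rev d) (rev c) (rev f) (rev g) e h"
    unfolding Y2_def by (rule Poly_mkY') (simp_all add: la le)
  have P3: "Poly Y3 = rowP n 1 (-1) (-1) 1 a (rev b) c d f g e h"
    unfolding Y3_def by (rule Poly_mkY') (simp_all add: la le)
  have R0: "Poly (rev Y0) = rowP n 1 (-1) 1 (-1) (rev a) (rev b) (rev c) d e (rev h) f (rev g)"
    unfolding Y0_def by (subst rev_mkY[where k=m and l=n], simp_all add: la le, rule Poly_mkY', simp_all add: la le)
  have R1: "Poly (rev Y1) = rowP n (-1) (-1) 1 1 (rev b) (rev a) (rev d) c (rev e) h f (rev g)"
    unfolding Y1_def by (subst rev_mkY[where k=m and l=n], simp_all add: la le, rule Poly_mkY', simp_all add: la le)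
  have R2: "Poly (rev Y2) = rowP n 1 1 1 1 b (rev a) d c f g (rev e) (rev h)"
    unfolding Y2_def by (subst rev_mkY[where k=m and l=n], simp_all add: la le, rule Poly_mkY', simp_all add: la le)
  have R3: "Poly (rev Y3) = rowP n 1 (-1) (-1) 1 (rev a) b (rev c) (rev d) (rev f) (rev g) (rev e) (rev h)"
    unfolding Y3_def by (subst rev_mkY[where k=m and l=n], simp_all add: la le, rule Poly_mkY', simp_all add: la le)
  have key: "Poly Y0 * Poly (rev Y0) + Poly Y1 * Poly (rev Y1) + Poly Y2 * Poly (rev Y2) + Poly Y3 * Poly (rev Y3)
     = (PW n a * PW n (rev a) + PW n b * PW n (rev b) + (XX^(2*n+1))^2 * (PW n c * PW n (rev c) + PW n d * PW n (rev d)))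
     * (PZ e * PZ (rev e) + PZ f * PZ (rev f) + XX^2 * (PZ g * PZ (rev g) + PZ h * PZ (rev h)))"
    unfolding P0 P1 P2 P3 R0 R1 R2 R3 rowP_def
    by (simp only: smult_1_left smult_minus_left) (rule ring_id)
  have hA: "PW n a * PW n (rev a) + PW n b * PW n (rev b) + (XX^(2*n+1))^2 * (PW n c * PW n (rev c) + PW n d * PW n (rev d))
      = smult (int (4*m+2)) (((XX^(2*n+1))^2)^m)"
    unfolding PW_def by (rule BS_poly_comp[OF bsA assms(1)])
  have hE: "PZ e * PZ (rev e) + PZ f * PZ (rev f) + XX^2 * (PZ g * PZ (rev g) + PZ h * PZ (rev h))
      = smult (int (4*n+2)) ((XX^2)^n)"
    unfolding PZ_def by (rule BS_poly_comp[OF bsE assms(2)])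
  have ex: "?L - 1 = (2*n+1)*2*m + 2*n" by (simp add: algebra_simps)
  have pw: "((XX^(2*n+1))^2)^m * (XX^2)^n = XX^(?L - 1)"
    unfolding ex by (simp only: power_add power_mult)
  have tot: "Poly Y0 * Poly (rev Y0) + Poly Y1 * Poly (rev Y1) + Poly Y2 * Poly (rev Y2) + Poly Y3 * Poly (rev Y3)
      = smult (int (4*m+2) * int (4*n+2)) (XX^(?L - 1))"
    unfolding key hA hE pw[symmetric] by (simp add: mult_smult_left mult_smult_right mult.commute)
  have "\<forall>j::nat. j \<ge> 1 \<longrightarrow> npaf Y0 j + npaf Y1 j + npaf Y2 j + npaf Y3 j = 0"
  proof (intro allI impI)
    fix j :: nat assume j1: "j \<ge> 1"
    show "npaf Y0 j + npaf Y1 j + npaf Y2 j + npaf Y3 j = 0"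
    proof (cases "j < ?L")
      case True
      have "npaf Y0 j + npaf Y1 j + npaf Y2 j + npaf Y3 j =
        coeff (Poly Y0 * Poly (rev Y0) + Poly Y1 * Poly (rev Y1) + Poly Y2 * Poly (rev Y2) + Poly Y3 * Poly (rev Y3)) (?L - 1 - j)"
        using npaf_bot[of j Y0] npaf_bot[of j Y1] npaf_bot[of j Y2] npaf_bot[of j Y3] len True
        by simp
      also have "\<dots> = 0" unfolding tot coeff_smult_XX using j1 True by simp
      finally show ?thesis .
    next
      case False
      then show ?thesis using len by (simp add: npaf_def)
    qed
  qed
  then have "(Y0, Y1, Y2, Y3) \<in> BS ?L ?L"
    unfolding BS_def using pm len by simp
  then show ?thesis by auto
qed


end
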